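(* Let $\mathcal V$ be a quaternionic Hermitian vector space of real dimension $4n$ with $n>1$, and let $\gamma_I,\gamma_J,\gamma_K\in\Lambda^2\mathcal V^*$ satisfy $$\gamma_I\wedge\omega_J=\gamma_J\wedge\omega_I,\qquad \gamma_J\wedge\omega_K=\gamma_K\wedge\omega_J,\qquad \gamma_K\wedge\omega_I=\gamma_I\wedge\omega_K .$$ Then $\langle\gamma_I,\omega_I\rangle=\langle\gamma_J,\omega_J\rangle=\langle\gamma_K,\omega_K\rangle$, and $\gamma_A=c\,\omega_A$ for $A=I,J,K$, where $2n\,c=\langle\gamma_I,\omega_I\rangle$.
   Context: $\mathcal V$ is a real $4n$-dimensional vector space with inner product $\langle\cdot,\cdot\rangle$ and endomorphisms $I,J,K$ with $I^2=J^2=-1$, $K=IJ=-JI$, $\langle Ax,Ay\rangle=\langle x,y\rangle$; $\omega_A(x,y)=\langle x,Ay\rangle$. The inner product on 2-forms is $\langle a,b\rangle=\tfrac12\sum_{i,j}a(e_i,e_j)b(e_i,e_j)$ for an orthonormal basis $\{e_i\}$; $\wedge$ is the exterior product of forms. *)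

theory Defs
  imports "HOL-Analysis.Analysis"
begin

definition quat_hermitian :: "('v::euclidean_space \<Rightarrow> 'v) \<Rightarrow> ('v \<Rightarrow> 'v) \<Rightarrow> ('v \<Rightarrow> 'v) \<Rightarrow> bool" where
  "quat_hermitian I J K \<longleftrightarrow>
     linear I \<and> linear J \<and> linear K \<and>
     (\<forall>x. I (I x) = - x) \<and> (\<forall>x. J (J x) = - x) \<and>
     (\<forall>x. K x = I (J x)) \<and> (\<forall>x. K x = - J (I x)) \<and>
     (\<forall>x y. I x \<bullet> I y = x \<bullet> y) \<and> (\<forall>x y. J x \<bullet> J y = x \<bullet> y) \<and>
     (\<forall>x y. K x \<bullet> K y = x \<bullet> y)"

definition omega :: "('v::euclidean_space \<Rightarrow> 'v) \<Rightarrow> 'v \<Rightarrow> 'v \<Rightarrow> real" where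
  "omega A x y = x \<bullet> A y"

definition two_form :: "('v::euclidean_space \<Rightarrow> 'v \<Rightarrow> real) \<Rightarrow> bool" where
  "two_form a \<longleftrightarrow> bilinear a \<and> (\<forall>x. a x x = 0)"

definition wedge2 :: "('v \<Rightarrow> 'v \<Rightarrow> real) \<Rightarrow> ('v \<Rightarrow> 'v \<Rightarrow> real) \<Rightarrow> 'v \<Rightarrow> 'v \<Rightarrow> 'v \<Rightarrow> 'v \<Rightarrow> real" where
  "wedge2 a b x1 x2 x3 x4 =
     a x1 x2 * b x3 x4 - a x1 x3 * b x2 x4 + a x1 x4 * b x2 x3
   + a x2 x3 * b x1 x4 - a x2 x4 * b x1 x3 + a x3 x4 * b x1 x2"

definition form_inner :: "('v::euclidean_space \<Rightarrow> 'v \<Rightarrow> real) \<Rightarrow> ('v \<Rightarrow> 'v \<Rightarrow> real) \<Rightarrow> real" where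
  "form_inner a b = (1/2) * (\<Sum>i\<in>Basis. \<Sum>j\<in>Basis. a i j * b i j)"

end

theory Submission
  imports Defs
begin


definition tr2 :: "('v::euclidean_space \<Rightarrow> 'v \<Rightarrow> real) \<Rightarrow> ('v \<Rightarrow> 'v) \<Rightarrow> real" where
  "tr2 X A = (\<Sum>i\<in>Basis. X i (A i))"

lemma bil_sum_right:
  fixes X :: "'v::euclidean_space \<Rightarrow> 'v \<Rightarrow> real"
  assumes "bilinear X" "linear M"
  shows "(\<Sum>i\<in>Basis. X u (M i) * (z \<bullet> i)) = X u (M z)"
proof -
  have l: "linear (\<lambda>y. X u (M y))"
    using assms unfolding bilinear_def by (auto intro: linear_compose[unfolded o_def])
  have "X u (M z) = X u (M (\<Sum>i\<in>Basis. (z \<bullet> i) *\<^sub>R i))" by (simp add: euclidean_representation)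
  also have "\<dots> = (\<Sum>i\<in>Basis. (z \<bullet> i) * X u (M i))"
    by (simp add: linear_sum[OF l] linear_scale[OF l])
  finally show ?thesis by (simp add: mult.commute)
qed

lemma bil_sum_left:
  fixes X :: "'v::euclidean_space \<Rightarrow> 'v \<Rightarrow> real"
  assumes "bilinear X" "linear M"
  shows "(\<Sum>i\<in>Basis. X (M i) u * (z \<bullet> i)) = X (M z) u"
proof -
  have l: "linear (\<lambda>y. X (M y) u)"
    using assms unfolding bilinear_def by (auto intro: linear_compose[unfolded o_def])
  have "X (M z) u = X (M (\<Sum>i\<in>Basis. (z \<bullet> i) *\<^sub>R i)) u" by (simp add: euclidean_representation)
  also have "\<dots> = (\<Sum>i\<in>Basis. (z \<bullet> i) * X (M i) u)"
    by (simp add: linear_sum[OF l] linear_scale[OF l])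
  finally show ?thesis by (simp add: mult.commute)
qed

lemma contract:
  fixes X :: "'v::euclidean_space \<Rightarrow> 'v \<Rightarrow> real"
  assumes X: "bilinear X" and Xs: "\<And>u v. X v u = - X u v"
    and B: "linear B" and C: "linear C"
    and sB: "\<And>u v. u \<bullet> B v = - (B u \<bullet> v)" and sC: "\<And>u v. u \<bullet> C v = - (C u \<bullet> v)"
  shows "(\<Sum>i\<in>Basis. wedge2 X (omega B) x y i (C i)) =
     (\<Sum>i\<in>Basis. i \<bullet> B (C i)) * X x y - 2 * (X x (C (B y)) + X (C (B x)) y)
     + tr2 X C * omega B x y"
proof -
  have idl: "linear (\<lambda>x::'v. x)" by (rule linear_id[unfolded id_def])
  have e1: "\<And>w i. w \<bullet> B (C i) = C (B w) \<bullet> i" using sB sC by (metis minus_minus)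
  have e2: "\<And>w i. w \<bullet> B i = - (B w \<bullet> i)" using sB by blast
  have s1: "(\<Sum>i\<in>Basis. X x i * omega B y (C i)) = X x (C (B y))"
    using bil_sum_right[OF X idl, of x "C (B y)"] by (simp add: omega_def e1)
  have s2: "(\<Sum>i\<in>Basis. X x (C i) * omega B y i) = - X x (C (B y))"
    using bil_sum_right[OF X C, of x "B y"] by (simp add: omega_def e2 sum_negf)
  have s3: "(\<Sum>i\<in>Basis. X y i * omega B x (C i)) = X y (C (B x))"
    using bil_sum_right[OF X idl, of y "C (B x)"] by (simp add: omega_def e1)
  have s4: "(\<Sum>i\<in>Basis. X y (C i) * omega B x i) = - X y (C (B x))"
    using bil_sum_right[OF X C, of y "B x"] by (simp add: omega_def e2 sum_negf)
  have "(\<Sum>i\<in>Basis. wedge2 X (omega B) x y i (C i)) =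
      X x y * (\<Sum>i\<in>Basis. omega B i (C i)) - (\<Sum>i\<in>Basis. X x i * omega B y (C i))
      + (\<Sum>i\<in>Basis. X x (C i) * omega B y i) + (\<Sum>i\<in>Basis. X y i * omega B x (C i))
      - (\<Sum>i\<in>Basis. X y (C i) * omega B x i) + (\<Sum>i\<in>Basis. X i (C i)) * omega B x y"
    unfolding wedge2_def by (simp add: sum.distrib sum_subtractf sum_distrib_left sum_distrib_right)
  also have "\<dots> = (\<Sum>i\<in>Basis. i \<bullet> B (C i)) * X x y - 2 * (X x (C (B y)) + X (C (B x)) y)
     + tr2 X C * omega B x y"
    unfolding s1 s2 s3 s4 tr2_def using Xs[of "C (B x)" y] by (simp add: omega_def algebra_simps)
  finally show ?thesis .
qed

lemma qh:
  assumes "quat_hermitian I J K"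
  shows "linear I" "linear J" "linear K"
    "\<And>x. I (I x) = - x" "\<And>x. J (J x) = - x" "\<And>x. K (K x) = - x"
    "\<And>x. I (J x) = K x" "\<And>x. J (I x) = - K x" "\<And>x. J (K x) = I x"
    "\<And>x. K (J x) = - I x" "\<And>x. K (I x) = J x" "\<And>x. I (K x) = - J x"
    "\<And>u v. I u \<bullet> v = - (u \<bullet> I v)" "\<And>u v. J u \<bullet> v = - (u \<bullet> J v)"
    "\<And>u v. K u \<bullet> v = - (u \<bullet> K v)"
    "\<And>u v. u \<bullet> I v = - (I u \<bullet> v)" "\<And>u v. u \<bullet> J v = - (J u \<bullet> v)"
    "\<And>u v. u \<bullet> K v = - (K u \<bullet> v)"
    "\<And>x. I (- x) = - I x" "\<And>x. J (- x) = - J x" "\<And>x. K (- x) = - K x"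
    "\<And>x. x \<bullet> I x = 0" "\<And>x. x \<bullet> J x = 0" "\<And>x. x \<bullet> K x = 0"
proof -
  note d = assms[unfolded quat_hermitian_def]
  show lI: "linear I" and lJ: "linear J" and lK: "linear K" using d by auto
  have II: "\<And>x. I (I x) = - x" and JJ: "\<And>x. J (J x) = - x" using d by auto
  have KIJ: "\<And>x. K x = I (J x)" and KJI: "\<And>x. K x = - J (I x)" using d by auto
  have nI: "\<And>x. I (- x) = - I x" using linear_neg[OF lI] by blast
  have nJ: "\<And>x. J (- x) = - J x" using linear_neg[OF lJ] by blast
  have nK: "\<And>x. K (- x) = - K x" using linear_neg[OF lK] by blast
  show "\<And>x. I (- x) = - I x" "\<And>x. J (- x) = - J x" "\<And>x. K (- x) = - K x" by fact+
  show "\<And>x. I (I x) = - x" "\<And>x. J (J x) = - x" by fact+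
  show IJ: "\<And>x. I (J x) = K x" using KIJ by simp
  show JI: "\<And>x. J (I x) = - K x" using KJI by simp
  show "\<And>x. J (K x) = I x" using KJI JJ II by (metis minus_minus nJ)
  show "\<And>x. K (J x) = - I x" using KIJ JJ nI by metis
  show "\<And>x. K (I x) = J x" using KJI II nJ by (metis minus_minus)
  show "\<And>x. I (K x) = - J x" using KIJ II by metis
  show KK: "\<And>x. K (K x) = - x" using KIJ KJI II JJ nI nJ by (metis minus_minus)
  have oI: "\<And>x y. I x \<bullet> I y = x \<bullet> y" and oJ: "\<And>x y. J x \<bullet> J y = x \<bullet> y"
    and oK: "\<And>x y. K x \<bullet> K y = x \<bullet> y" using d by auto
  have sI: "\<And>u v. u \<bullet> I v = - (I u \<bullet> v)"
    by (metis II inner_minus_right oI)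
  have sJ: "\<And>u v. u \<bullet> J v = - (J u \<bullet> v)"
    by (metis JJ inner_minus_right oJ)
  have sK: "\<And>u v. u \<bullet> K v = - (K u \<bullet> v)"
    by (metis KK inner_minus_right oK)
  show "\<And>u v. u \<bullet> I v = - (I u \<bullet> v)" "\<And>u v. u \<bullet> J v = - (J u \<bullet> v)"
    "\<And>u v. u \<bullet> K v = - (K u \<bullet> v)" by fact+
  show "\<And>u v. I u \<bullet> v = - (u \<bullet> I v)" "\<And>u v. J u \<bullet> v = - (u \<bullet> J v)"
    "\<And>u v. K u \<bullet> v = - (u \<bullet> K v)" using sI sJ sK by (metis minus_minus)+
  show "\<And>x. x \<bullet> I x = 0" proof - fix x show "x \<bullet> I x = 0" using sI[of x x] inner_commute[of x "I x"] by linarith qed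
  show "\<And>x. x \<bullet> J x = 0" proof - fix x show "x \<bullet> J x = 0" using sJ[of x x] inner_commute[of x "J x"] by linarith qed
  show "\<And>x. x \<bullet> K x = 0" proof - fix x show "x \<bullet> K x = 0" using sK[of x x] inner_commute[of x "K x"] by linarith qed
qed

lemma tf:
  fixes a :: "'v::euclidean_space \<Rightarrow> 'v \<Rightarrow> real"
  assumes "two_form a"
  shows "bilinear a" "\<And>u v. a v u = - a u v" "\<And>u v. a (- u) v = - a u v" "\<And>u v. a u (- v) = - a u v"
proof -
  show b: "bilinear a" using assms two_form_def by blast
  have l1: "\<And>u. linear (a u)" and l2: "\<And>v. linear (\<lambda>u. a u v)" using b unfolding bilinear_def by auto
  show "\<And>u v. a (- u) v = - a u v" using l2 linear_neg by fastforce
  show "\<And>u v. a u (- v) = - a u v" using l1 linear_neg by fastforce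
  show "\<And>u v. a v u = - a u v"
  proof -
    fix u v
    have "a (u + v) (u + v) = 0" using assms two_form_def by blast
    moreover have "a (u + v) (u + v) = a u u + a u v + a v u + a v v"
      using l1 l2 linear_add by (metis (no_types, lifting) add.assoc)
    moreover have "a u u = 0" "a v v = 0" using assms two_form_def by blast+
    ultimately show "a v u = - a u v" by linarith
  qed
qed

lemma sum_ii: "(\<Sum>i\<in>(Basis::'v::euclidean_space set). i \<bullet> i) = real DIM('v)"
  by (simp add: inner_Basis)

lemma contr:
  fixes a b :: "'v::euclidean_space \<Rightarrow> 'v \<Rightarrow> real"
  assumes q: "quat_hermitian I J K" and ta: "two_form a" and tb: "two_form b"
    and w: "wedge2 a (omega J) = wedge2 b (omega I)" and D: "DIM('v) = 4 * n"
  shows "(4 - 4*real n) * a x y + tr2 a J * omega J x y = 2*(b x (K y) + b (K x) y) + tr2 b J * omega I x y"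
    "(4 - 4*real n) * b x y + tr2 b I * omega I x y = -2*(a x (K y) + a (K x) y) + tr2 a I * omega J x y"
    "2*(a x (I y) + a (I x) y) + tr2 a K * omega J x y = -2*(b x (J y) + b (J x) y) + tr2 b K * omega I x y"
proof -
  note Q = qh[OF q]
  note A = tf[OF ta] and B = tf[OF tb]
  note cA = contract[OF A(1) A(2)] and cB = contract[OF B(1) B(2)]
  note ns = Q(4-12) Q(19-24) A(3,4) B(3,4) inner_minus_right sum_negf sum_ii D
  have "(\<Sum>i\<in>Basis. wedge2 a (omega J) x y i (J i)) = (\<Sum>i\<in>Basis. wedge2 b (omega I) x y i (J i))"
    by (simp add: w)
  then show "(4 - 4*real n) * a x y + tr2 a J * omega J x y = 2*(b x (K y) + b (K x) y) + tr2 b J * omega I x y"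
    unfolding cA[OF Q(2) Q(2) Q(17) Q(17)] cB[OF Q(1) Q(2) Q(16) Q(17)]
    by (simp add: ns algebra_simps)
  have "(\<Sum>i\<in>Basis. wedge2 a (omega J) x y i (I i)) = (\<Sum>i\<in>Basis. wedge2 b (omega I) x y i (I i))"
    by (simp add: w)
  then show "(4 - 4*real n) * b x y + tr2 b I * omega I x y = -2*(a x (K y) + a (K x) y) + tr2 a I * omega J x y"
    unfolding cA[OF Q(2) Q(1) Q(17) Q(16)] cB[OF Q(1) Q(1) Q(16) Q(16)]
    by (simp add: ns algebra_simps)
  have "(\<Sum>i\<in>Basis. wedge2 a (omega J) x y i (K i)) = (\<Sum>i\<in>Basis. wedge2 b (omega I) x y i (K i))"
    by (simp add: w)
  then show "2*(a x (I y) + a (I x) y) + tr2 a K * omega J x y = -2*(b x (J y) + b (J x) y) + tr2 b K * omega I x y"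
    unfolding cA[OF Q(2) Q(3) Q(17) Q(18)] cB[OF Q(1) Q(3) Q(16) Q(18)]
    by (simp add: ns algebra_simps)
qed

lemma qh_cyc: "quat_hermitian I J K \<Longrightarrow> quat_hermitian J K I"
proof -
  assume q: "quat_hermitian I J K"
  note Q = qh[OF q]
  show ?thesis using q unfolding quat_hermitian_def by (auto simp: Q(4-12))
qed

lemma comb:
  fixes N tcI taI tbK tcK taK tbI tcJ taJ xy xIy xJy xKy b c1 c2 a1 a2 a3 a4 b2 c3 c4 :: real
  assumes
 h1: "(4-4*N)*c1 + tcI*xy = 2*(a1 - a2) + taI*xJy" and
 h2: "(4-4*N)*c2 - tcI*xy = 2*(a4 - a3) + taI*xJy" and
 h3: "(4-4*N)*b + tbK*xKy = 2*(c2+c1) + tcK*xJy" and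
 h4: "2*(a4+a2) + taK*xy = -2*(b2 - b) + tbK*xKy" and
 h5: "2*(a3+a1) - taK*xy = -2*(b2 - b) + tbK*xKy" and
 h6: "2*(b2-b) - tbI*xIy = -2*(c3 - c1) + tcI*xy" and
 h7: "2*(b2-b) - tbI*xIy = -2*(c4 - c2) - tcI*xy" and
 h8: "2*(c3-c1) + tcJ*xKy = -2*(a4+a2) - taJ*xIy" and
 h9: "2*(c4-c2) + tcJ*xKy = -2*(a3+a1) - taJ*xIy" and
 h10: "(4-4*N)*b + tbI*xIy = -2*(a3+a2) + taI*xJy"
  shows "16*N*(N-1)*b = (2*tbI - 2*taJ)*xIy + (4-4*N)*tcK*xJy + ((4*N-2)*tbK - 2*tcJ)*xKy"
proof -
  have "16*N*(N-1)*b - ((2*tbI - 2*taJ)*xIy + (4-4*N)*tcK*xJy + ((4*N-2)*tbK - 2*tcJ)*xKy)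
    = (4-4*N)*(((4-4*N)*b + tbK*xKy) - (2*(c2+c1) + tcK*xJy))
      + 2*(((4-4*N)*c1 + tcI*xy) - (2*(a1 - a2) + taI*xJy))
      + 2*(((4-4*N)*c2 - tcI*xy) - (2*(a4 - a3) + taI*xJy))
      + ((2*(a4+a2) + taK*xy) - (-2*(b2 - b) + tbK*xKy))
      - ((2*(b2-b) - tbI*xIy) - (-2*(c3 - c1) + tcI*xy))
      + ((2*(c3-c1) + tcJ*xKy) - (-2*(a4+a2) - taJ*xIy))
      + ((2*(a3+a1) - taK*xy) - (-2*(b2 - b) + tbK*xKy))
      - ((2*(b2-b) - tbI*xIy) - (-2*(c4 - c2) - tcI*xy))
      + ((2*(c4-c2) + tcJ*xKy) - (-2*(a3+a1) - taJ*xIy))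
      - 4*(((4-4*N)*b + tbI*xIy) - (-2*(a3+a2) + taI*xJy))"
    by (simp add: algebra_simps)
  also have "\<dots> = 0" using assms by simp
  finally show ?thesis by simp
qed

lemma span_b:
  fixes a b c :: "'v::euclidean_space \<Rightarrow> 'v \<Rightarrow> real"
  assumes q: "quat_hermitian I J K" and ta: "two_form a" and tb: "two_form b" and tc: "two_form c"
    and w1: "wedge2 a (omega J) = wedge2 b (omega I)"
    and w2: "wedge2 b (omega K) = wedge2 c (omega J)"
    and w3: "wedge2 c (omega I) = wedge2 a (omega K)"
    and D: "DIM('v) = 4 * n"
  shows "16*real n*(real n-1)*b x y = (2*tr2 b I - 2*tr2 a J)* omega I x y + (4-4*real n)*tr2 c K* omega J x y + ((4*real n-2)*tr2 b K - 2*tr2 c J)* omega K x y"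
proof -
  note Q = qh[OF q]
  note A = tf[OF ta] and B = tf[OF tb] and C = tf[OF tc]
  note E1 = contr[OF q ta tb w1 D]
  note E2 = contr[OF qh_cyc[OF q] tb tc w2 D]
  note E3 = contr[OF qh_cyc[OF qh_cyc[OF q]] tc ta w3 D]
  note ns = Q(4-15) Q(19-24) A(3,4) B(3,4) C(3,4) inner_minus_right inner_minus_left omega_def
  have i1: "(4 - 4*real n) * c (I x) y + tr2 c I * omega I (I x) y = 2*(a (I x) (J y) + a (J (I x)) y) + tr2 a I * omega K (I x) y" by (rule E3(1))
  have i2: "(4 - 4*real n) * c x (I y) + tr2 c I * omega I x (I y) = 2*(a x (J (I y)) + a (J x) (I y)) + tr2 a I * omega K x (I y)" by (rule E3(1))
  have i3: "(4 - 4*real n) * b x y + tr2 b K * omega K x y = 2*(c x (I y) + c (I x) y) + tr2 c K * omega J x y" by (rule E2(1))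
  have i4: "2*(a (J x) (I y) + a (I (J x)) y) + tr2 a K * omega J (J x) y = -2*(b (J x) (J y) + b (J (J x)) y) + tr2 b K * omega I (J x) y" by (rule E1(3))
  have i5: "2*(a x (I (J y)) + a (I x) (J y)) + tr2 a K * omega J x (J y) = -2*(b x (J (J y)) + b (J x) (J y)) + tr2 b K * omega I x (J y)" by (rule E1(3))
  have i6: "2*(b (J x) (J y) + b (J (J x)) y) + tr2 b I * omega K (J x) y = -2*(c (J x) (K y) + c (K (J x)) y) + tr2 c I * omega J (J x) y" by (rule E2(3))
  have i7: "2*(b x (J (J y)) + b (J x) (J y)) + tr2 b I * omega K x (J y) = -2*(c x (K (J y)) + c (K x) (J y)) + tr2 c I * omega J x (J y)" by (rule E2(3))
  have i8: "2*(c (J x) (K y) + c (K (J x)) y) + tr2 c J * omega I (J x) y = -2*(a (J x) (I y) + a (I (J x)) y) + tr2 a J * omega K (J x) y" by (rule E3(3))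
  have i9: "2*(c x (K (J y)) + c (K x) (J y)) + tr2 c J * omega I x (J y) = -2*(a x (I (J y)) + a (I x) (J y)) + tr2 a J * omega K x (J y)" by (rule E3(3))
  have i10: "(4 - 4*real n) * b x y + tr2 b I * omega I x y = -2*(a x (K y) + a (K x) y) + tr2 a I * omega J x y" by (rule E1(2))
  have i3': "(4 - 4*real n) * ((4 - 4*real n) * b x y + tr2 b K * omega K x y) = (4 - 4*real n) * (2*(c x (I y) + c (I x) y) + tr2 c K * omega J x y)"
    using i3 by simp
  let ?N = "real n"
  have h1: "(4-4*?N)*c (I x) y + tr2 c I*(x \<bullet> y) = 2*(a (I x) (J y) - a (K x) y) + tr2 a I*(x \<bullet> J y)"
    using i1 by (simp add: ns)
  have h2: "(4-4*?N)*c x (I y) - tr2 c I*(x \<bullet> y) = 2*(a (J x) (I y) - a x (K y)) + tr2 a I*(x \<bullet> J y)"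
    using i2 by (simp add: ns)
  have h3: "(4-4*?N)*b x y + tr2 b K*(x \<bullet> K y) = 2*(c x (I y) + c (I x) y) + tr2 c K*(x \<bullet> J y)"
    using i3 by (simp add: ns)
  have h4: "2*(a (J x) (I y) + a (K x) y) + tr2 a K*(x \<bullet> y) = -2*(b (J x) (J y) - b x y) + tr2 b K*(x \<bullet> K y)"
    using i4 by (simp add: ns)
  have h5: "2*(a x (K y) + a (I x) (J y)) - tr2 a K*(x \<bullet> y) = -2*(b (J x) (J y) - b x y) + tr2 b K*(x \<bullet> K y)"
    using i5 by (simp add: ns)
  have h6: "2*(b (J x) (J y) - b x y) - tr2 b I*(x \<bullet> I y) = -2*(c (J x) (K y) - c (I x) y) + tr2 c I*(x \<bullet> y)"
    using i6 by (simp add: ns)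
  have h7: "2*(b (J x) (J y) - b x y) - tr2 b I*(x \<bullet> I y) = -2*(c (K x) (J y) - c x (I y)) - tr2 c I*(x \<bullet> y)"
    using i7 by (simp add: ns)
  have h8: "2*(c (J x) (K y) - c (I x) y) + tr2 c J*(x \<bullet> K y) = -2*(a (J x) (I y) + a (K x) y) - tr2 a J*(x \<bullet> I y)"
    using i8 by (simp add: ns)
  have h9: "2*(c (K x) (J y) - c x (I y)) + tr2 c J*(x \<bullet> K y) = -2*(a x (K y) + a (I x) (J y)) - tr2 a J*(x \<bullet> I y)"
    using i9 by (simp add: ns)
  have h10: "(4-4*?N)*b x y + tr2 b I*(x \<bullet> I y) = -2*(a x (K y) + a (K x) y) + tr2 a I*(x \<bullet> J y)"
    using i10 by (simp add: ns)
  show ?thesis using comb[OF h1 h2 h3 h4 h5 h6 h7 h8 h9 h10] unfolding omega_def by simp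
qed

lemma trspan:
  fixes I J K :: "'v::euclidean_space \<Rightarrow> 'v"
  assumes q: "quat_hermitian I J K"
  shows "tr2 (\<lambda>x y. p1 * omega I x y + p2 * omega J x y + p3 * omega K x y) I = - real DIM('v) * p1"
    "tr2 (\<lambda>x y. p1 * omega I x y + p2 * omega J x y + p3 * omega K x y) J = - real DIM('v) * p2"
    "tr2 (\<lambda>x y. p1 * omega I x y + p2 * omega J x y + p3 * omega K x y) K = - real DIM('v) * p3"
proof -
  note Q = qh[OF q]
  show "tr2 (\<lambda>x y. p1 * omega I x y + p2 * omega J x y + p3 * omega K x y) I = - real DIM('v) * p1"
    unfolding tr2_def omega_def by (simp add: Q(4-12) Q(19-24) sum.distrib sum_ii flip: sum_distrib_left)
  show "tr2 (\<lambda>x y. p1 * omega I x y + p2 * omega J x y + p3 * omega K x y) J = - real DIM('v) * p2"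
    unfolding tr2_def omega_def by (simp add: Q(4-12) Q(19-24) sum.distrib sum_ii flip: sum_distrib_left)
  show "tr2 (\<lambda>x y. p1 * omega I x y + p2 * omega J x y + p3 * omega K x y) K = - real DIM('v) * p3"
    unfolding tr2_def omega_def by (simp add: Q(4-12) Q(19-24) sum.distrib sum_ii flip: sum_distrib_left)
qed

lemma coef:
  fixes a b :: "'v::euclidean_space \<Rightarrow> 'v \<Rightarrow> real"
  assumes q: "quat_hermitian I J K" and ta: "two_form a" and tb: "two_form b"
    and w: "wedge2 a (omega J) = wedge2 b (omega I)" and D: "DIM('v) = 4 * n" and n: "n > 1"
    and sa: "a = (\<lambda>x y. p1 * omega I x y + p2 * omega J x y + p3 * omega K x y)"
    and sb: "b = (\<lambda>x y. q1 * omega I x y + q2 * omega J x y + q3 * omega K x y)"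
  shows "p2 = 0 \<and> p3 = 0 \<and> q1 = 0 \<and> q3 = 0 \<and> p1 = q2"
proof -
  note Q = qh[OF q]
  note C = contr[OF q ta tb w D]
  obtain e :: 'v where e: "e \<in> Basis" using nonempty_Basis by blast
  have ee: "e \<bullet> e = 1" using e by (simp add: inner_Basis)
  note T = trspan[OF q] D
  note ns = Q(4-15) Q(19-24) inner_minus_right inner_minus_left omega_def ee
  note g1 = C(1)[of e "I e", unfolded sa sb T, simplified ns]
  note g2 = C(1)[of e "J e", unfolded sa sb T, simplified ns]
  note g3 = C(1)[of e "K e", unfolded sa sb T, simplified ns]
  note g4 = C(2)[of e "I e", unfolded sa sb T, simplified ns]
  note g5 = C(2)[of e "J e", unfolded sa sb T, simplified ns]
  note g6 = C(2)[of e "K e", unfolded sa sb T, simplified ns]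
  have N: "real n > 1" using n by simp
  have e1: "(4 - 4 * real n) * p1 = (4 - 4 * real n) * q2" using g1 by (simp add: algebra_simps)
  have e2: "(2 * real n - 1) * p2 = q1" using g2 by (simp add: algebra_simps)
  have e3: "(4 - 4 * real n) * p3 = 0" using g3 by (simp add: algebra_simps)
  have e4: "(2 * real n - 1) * q1 = p2" using g4 by (simp add: algebra_simps)
  have e6: "(4 - 4 * real n) * q3 = 0" using g6 by (simp add: algebra_simps)
  have nz: "4 - 4 * real n \<noteq> 0" using N by simp
  have "(2 * real n - 1) * ((2 * real n - 1) * p2) = p2" using e2 e4 by simp
  then have "(4 * real n * (real n - 1)) * p2 = 0" by (simp add: algebra_simps)
  moreover have "4 * real n * (real n - 1) \<noteq> 0" using N by simp
  ultimately have p2: "p2 = 0" by simp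
  show ?thesis using e1 e3 e6 nz p2 e2 by simp
qed

lemma span_ex:
  fixes X F G H :: "'v \<Rightarrow> 'v \<Rightarrow> real"
  assumes h: "\<And>x y. d * X x y = \<alpha> * F x y + \<beta> * G x y + \<gamma> * H x y" and d: "d \<noteq> 0"
  shows "\<exists>u v w. X = (\<lambda>x y. u * F x y + v * G x y + w * H x y)"
proof (intro exI ext)
  fix x y
  show "X x y = \<alpha>/d * F x y + \<beta>/d * G x y + \<gamma>/d * H x y"
    using h[of x y] d by (simp add: field_simps)
qed

lemma finner:
  fixes I J K :: "'v::euclidean_space \<Rightarrow> 'v"
  assumes q: "quat_hermitian I J K"
  shows "form_inner (\<lambda>x y. p * omega I x y) (omega I) = 2 * real DIM('v) / 4 * p"
    "form_inner (\<lambda>x y. p * omega J x y) (omega J) = 2 * real DIM('v) / 4 * p"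
    "form_inner (\<lambda>x y. p * omega K x y) (omega K) = 2 * real DIM('v) / 4 * p"
proof -
  note Q = qh[OF q]
  have gen: "form_inner (\<lambda>x y. p * omega A x y) (omega A) = 2 * real DIM('v) / 4 * p"
    if oA: "\<And>x y. A x \<bullet> A y = x \<bullet> y" for A :: "'v \<Rightarrow> 'v"
  proof -
    have r: "(\<Sum>i\<in>Basis. (i \<bullet> A j) * (i \<bullet> A j)) = A j \<bullet> A j" for j
    proof -
      have "A j = (\<Sum>i\<in>Basis. (A j \<bullet> i) *\<^sub>R i)" by (simp add: euclidean_representation)
      then have "A j \<bullet> A j = (\<Sum>i\<in>Basis. (A j \<bullet> i) * (i \<bullet> A j))"
        by (metis (no_types, lifting) inner_sum_left inner_scaleR_left sum.cong)
      then show ?thesis by (simp add: inner_commute)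
    qed
    have "form_inner (\<lambda>x y. p * omega A x y) (omega A) = 1/2 * (\<Sum>j\<in>Basis. p * (\<Sum>i\<in>Basis. (i \<bullet> A j) * (i \<bullet> A j)))"
      unfolding form_inner_def omega_def by (subst sum.swap) (simp add: sum_distrib_left mult.assoc)
    also have "\<dots> = 1/2 * (\<Sum>j\<in>(Basis::'v set). p)" unfolding r oA by (simp add: inner_Basis)
    finally show ?thesis by simp
  qed
  show "form_inner (\<lambda>x y. p * omega I x y) (omega I) = 2 * real DIM('v) / 4 * p"
    by (rule gen, use q in \<open>simp add: quat_hermitian_def\<close>)
  show "form_inner (\<lambda>x y. p * omega J x y) (omega J) = 2 * real DIM('v) / 4 * p"
    by (rule gen, use q in \<open>simp add: quat_hermitian_def\<close>)
  show "form_inner (\<lambda>x y. p * omega K x y) (omega K) = 2 * real DIM('v) / 4 * p"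
    by (rule gen, use q in \<open>simp add: quat_hermitian_def\<close>)
qed


theorem lemma6p5:
  fixes I J K :: "'v::euclidean_space \<Rightarrow> 'v"
    and gI gJ gK :: "'v \<Rightarrow> 'v \<Rightarrow> real"
    and n :: nat
  assumes "DIM('v) = 4 * n" and "n > 1"
    and "quat_hermitian I J K"
    and "two_form gI" and "two_form gJ" and "two_form gK"
    and "wedge2 gI (omega J) = wedge2 gJ (omega I)"
    and "wedge2 gJ (omega K) = wedge2 gK (omega J)"
    and "wedge2 gK (omega I) = wedge2 gI (omega K)"
  shows "form_inner gI (omega I) = form_inner gJ (omega J)
       \<and> form_inner gJ (omega J) = form_inner gK (omega K)
       \<and> (\<forall>c. 2 * real n * c = form_inner gI (omega I) \<longrightarrow>
              gI = (\<lambda>x y. c * omega I x y) \<and> gJ = (\<lambda>x y. c * omega J x y)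
              \<and> gK = (\<lambda>x y. c * omega K x y))"
proof -
  note q = assms(3)
  note q2 = qh_cyc[OF q]
  note q3 = qh_cyc[OF q2]
  have N: "real n > 1" using assms(2) by simp
  have d: "16*real n*(real n-1) \<noteq> 0" using N by simp
  note SB = span_b[OF q assms(4,5,6) assms(7,8,9) assms(1)]
  note SC = span_b[OF q2 assms(5,6,4) assms(8,9,7) assms(1)]
  note SA = span_b[OF q3 assms(6,4,5) assms(9,7,8) assms(1)]
  obtain u1 u2 u3 where pa0: "gI = (\<lambda>x y. u1 * omega K x y + u2 * omega I x y + u3 * omega J x y)"
    using span_ex[where X=gI and F="omega K" and G="omega I" and H="omega J", OF SA d] by blast
  obtain v1 v2 v3 where pb0: "gJ = (\<lambda>x y. v1 * omega I x y + v2 * omega J x y + v3 * omega K x y)"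
    using span_ex[where X=gJ and F="omega I" and G="omega J" and H="omega K", OF SB d] by blast
  obtain w1 w2 w3 where pc0: "gK = (\<lambda>x y. w1 * omega J x y + w2 * omega K x y + w3 * omega I x y)"
    using span_ex[where X=gK and F="omega J" and G="omega K" and H="omega I", OF SC d] by blast
  have pa: "gI = (\<lambda>x y. u2 * omega I x y + u3 * omega J x y + u1 * omega K x y)"
    "gI = (\<lambda>x y. u1 * omega K x y + u2 * omega I x y + u3 * omega J x y)"
    unfolding pa0 by (auto simp: algebra_simps)
  have pb: "gJ = (\<lambda>x y. v1 * omega I x y + v2 * omega J x y + v3 * omega K x y)"
    "gJ = (\<lambda>x y. v2 * omega J x y + v3 * omega K x y + v1 * omega I x y)"
    unfolding pb0 by (auto simp: algebra_simps)
  have pc: "gK = (\<lambda>x y. w1 * omega J x y + w2 * omega K x y + w3 * omega I x y)"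
    "gK = (\<lambda>x y. w2 * omega K x y + w3 * omega I x y + w1 * omega J x y)"
    unfolding pc0 by (auto simp: algebra_simps)
  have c1: "u3 = 0 \<and> u1 = 0 \<and> v1 = 0 \<and> v3 = 0 \<and> u2 = v2"
    by (rule coef[OF q assms(4,5,7,1,2) pa(1) pb(1)])
  have c2: "v3 = 0 \<and> v1 = 0 \<and> w1 = 0 \<and> w3 = 0 \<and> v2 = w2"
    by (rule coef[OF q2 assms(5,6,8,1,2) pb(2) pc(1)])
  have c3: "w3 = 0 \<and> w1 = 0 \<and> u1 = 0 \<and> u3 = 0 \<and> w2 = u2"
    by (rule coef[OF q3 assms(6,4,9,1,2) pc(2) pa(2)])
  have fa: "gI = (\<lambda>x y. u2 * omega I x y)" using pa(1) c1 by simp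
  have fb: "gJ = (\<lambda>x y. u2 * omega J x y)" using pb(1) c1 by simp
  have fc: "gK = (\<lambda>x y. u2 * omega K x y)" using pc(1) c1 c2 by simp
  note F = finner[OF q, of u2]
  have iI: "form_inner gI (omega I) = 2 * real n * u2" using F(1) assms(1) fa by simp
  have iJ: "form_inner gJ (omega J) = 2 * real n * u2" using F(2) assms(1) fb by simp
  have iK: "form_inner gK (omega K) = 2 * real n * u2" using F(3) assms(1) fc by simp
  show ?thesis
  proof (intro conjI allI impI)
    show "form_inner gI (omega I) = form_inner gJ (omega J)" using iI iJ by simp
    show "form_inner gJ (omega J) = form_inner gK (omega K)" using iJ iK by simp
    fix c assume "2 * real n * c = form_inner gI (omega I)"
    then have "c = u2" using iI N by simp
    then show "gI = (\<lambda>x y. c * omega I x y)" "gJ = (\<lambda>x y. c * omega J x y)"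
      "gK = (\<lambda>x y. c * omega K x y)" using fa fb fc by simp_all
  qed
qed

end
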